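(* Let $d\geq1$, $q>1$, $0<\alpha<d$. Let $w:(0,\infty)\to\mathbb{R}$ be a measurable function such that $$\int_0^\infty|w(\rho)|^{\frac q{q-1}}\rho^{\frac{\alpha q+1-d}{q-1}}\,d\rho<\infty,$$ and set $W(\rho)=\int_\rho^\infty w(t)\,dt$. Then for every measurable function $u$ on $\mathbb{R}^d$, $$\left|\int_{\mathbb{R}^d}|u(x)|W(|x|)\,dx\right|\lesssim\left(\int_0^\infty|w(\rho)|^{\frac q{q-1}}\rho^{\frac{\alpha q+1-d}{q-1}}d\rho\right)^{\frac{q-1}q}\left(\int_0^\infty\left(\fint_{B_\rho(0)}|u(y)|\,dy\right)^q\rho^{(d-\alpha)q+d-1}d\rho\right)^{\frac1q},$$ with an implicit constant depending only on $d$, and consequently there is $C>0$ (depending on $d,q,\alpha,w$) such that $$\left|\int_{\mathbb{R}^d}|u(x)|W(|x|)\,dx\right|\leq C\left\|\tfrac{1}{|x|^\alpha}\star|u|\right\|_{L^q(\mathbb{R}^d)}.$$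
   Context: $B_\rho(0)$ is the open ball of radius $\rho$ centered at the origin, $\fint_B$ denotes the average over $B$, and $\star$ denotes convolution. *)

theory Defs
  imports "HOL-Analysis.Analysis"
begin

definition tail_int :: "(real \<Rightarrow> real) \<Rightarrow> real \<Rightarrow> real" where
  "tail_int w \<rho> = (LBINT t:{\<rho><..}. w t)"

definition w_weight :: "nat \<Rightarrow> real \<Rightarrow> real \<Rightarrow> (real \<Rightarrow> real) \<Rightarrow> real \<Rightarrow> real" where
  "w_weight d q \<alpha> w \<rho> = \<bar>w \<rho>\<bar> powr (q / (q - 1)) * \<rho> powr ((\<alpha> * q + 1 - real d) / (q - 1))"

definition ball_avg :: "('a::euclidean_space \<Rightarrow> real) \<Rightarrow> real \<Rightarrow> real" where
  "ball_avg u \<rho> = (LINT y:ball 0 \<rho>|lebesgue. \<bar>u y\<bar>) / measure lebesgue (ball (0::'a) \<rho>)"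

definition avg_weight :: "nat \<Rightarrow> real \<Rightarrow> real \<Rightarrow> ('a::euclidean_space \<Rightarrow> real) \<Rightarrow> real \<Rightarrow> real" where
  "avg_weight d q \<alpha> u \<rho> = (ball_avg u \<rho>) powr q * \<rho> powr ((real d - \<alpha>) * q + real d - 1)"

definition riesz_conv :: "real \<Rightarrow> ('a::euclidean_space \<Rightarrow> real) \<Rightarrow> 'a \<Rightarrow> real" where
  "riesz_conv \<alpha> u x = (LINT y|lebesgue. \<bar>u y\<bar> / norm (x - y) powr \<alpha>)"

end

theory Submission
  imports Defs
begin


lemma holder_real:
  fixes f g :: "'b \<Rightarrow> real" and p q :: real
  assumes pq: "p > 1" "q > 1" "1/p + 1/q = 1"
    and fm: "f \<in> borel_measurable M" and gm: "g \<in> borel_measurable M"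
    and f0: "\<And>x. f x \<ge> 0" and g0: "\<And>x. g x \<ge> 0"
    and fi: "integrable M (\<lambda>x. f x powr p)" and gi: "integrable M (\<lambda>x. g x powr q)"
  shows "integrable M (\<lambda>x. f x * g x)"
    and "(LINT x|M. f x * g x) \<le> (LINT x|M. f x powr p) powr (1/p) * (LINT x|M. g x powr q) powr (1/q)"
proof -
  have Y: "\<And>a b. a \<ge> 0 \<Longrightarrow> b \<ge> 0 \<Longrightarrow> a * b \<le> a powr p / p + b powr q / q"
    using Youngs_inequality pq by blast
  show int: "integrable M (\<lambda>x. f x * g x)"
  proof (rule Bochner_Integration.integrable_bound)
    show "integrable M (\<lambda>x. f x powr p / p + g x powr q / q)" using fi gi by auto
    show "(\<lambda>x. f x * g x) \<in> borel_measurable M" using fm gm by auto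
    show "AE x in M. norm (f x * g x) \<le> norm (f x powr p / p + g x powr q / q)"
      using Y f0 g0 pq by (auto intro!: AE_I2 simp: abs_mult)
  qed
  define A where "A = (LINT x|M. f x powr p)"
  define B where "B = (LINT x|M. g x powr q)"
  have A0: "A \<ge> 0" unfolding A_def by (auto intro!: integral_nonneg_AE)
  have B0: "B \<ge> 0" unfolding B_def by (auto intro!: integral_nonneg_AE)
  show "(LINT x|M. f x * g x) \<le> A powr (1/p) * B powr (1/q)"
  proof (cases "A = 0 \<or> B = 0")
    case True
    then have "AE x in M. f x * g x = 0"
    proof
      assume "A = 0"
      then have "AE x in M. f x powr p = 0" unfolding A_def
        using integral_nonneg_eq_0_iff_AE[OF fi] by auto
      then show ?thesis by eventually_elim auto
    next
      assume "B = 0"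
      then have "AE x in M. g x powr q = 0" unfolding B_def
        using integral_nonneg_eq_0_iff_AE[OF gi] by auto
      then show ?thesis by eventually_elim auto
    qed
    then have "(LINT x|M. f x * g x) = 0" by (simp add: integral_eq_zero_AE)
    then show ?thesis using A0 B0 by simp
  next
    case False
    then have Ap: "A > 0" and Bp: "B > 0" using A0 B0 by auto
    define a where "a = A powr (1/p)"
    define b where "b = B powr (1/q)"
    have ap: "a > 0" "b > 0" using Ap Bp by (auto simp: a_def b_def)
    have ap': "a powr p = A" "b powr q = B" using Ap Bp pq by (auto simp: a_def b_def powr_powr)
    have pt: "f x * g x / (a * b) \<le> f x powr p / (p * A) + g x powr q / (q * B)" for x
    proof -
      have "(f x / a) * (g x / b) \<le> (f x / a) powr p / p + (g x / b) powr q / q"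
        using Y[of "f x / a" "g x / b"] f0 g0 ap by auto
      also have "(f x / a) powr p = f x powr p / A" using ap ap' f0 by (simp add: powr_divide)
      also have "(g x / b) powr q = g x powr q / B" using ap ap' g0 by (simp add: powr_divide)
      finally show ?thesis by (simp add: field_simps)
    qed
    have "(LINT x|M. f x * g x / (a * b)) \<le> (LINT x|M. f x powr p / (p * A) + g x powr q / (q * B))"
      using int fi gi pt by (intro integral_mono) auto
    also have "\<dots> = A / (p*A) + B / (q*B)"
      using fi gi by (simp add: A_def B_def)
    also have "\<dots> = 1" using Ap Bp pq by simp
    finally have "(LINT x|M. f x * g x) / (a*b) \<le> 1" by simp
    then show ?thesis using ap by (simp add: a_def b_def field_simps)
  qed
qed



lemma sigma_finite_lebesgue: "sigma_finite_measure (lebesgue :: 'a::euclidean_space measure)"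
proof
  show "\<exists>A. countable A \<and> A \<subseteq> sets (lebesgue::'a measure) \<and> \<Union> A = space lebesgue \<and> (\<forall>a\<in>A. emeasure lebesgue a \<noteq> \<infinity>)"
  proof (intro exI conjI)
    let ?A = "range (\<lambda>n::nat. cball (0::'a) (real n))"
    show "countable ?A" by auto
    show "?A \<subseteq> sets lebesgue" by auto
    show "\<Union> ?A = space lebesgue"
      using real_arch_simple by (force simp: mem_cball_0)
    show "\<forall>a\<in>?A. emeasure lebesgue a \<noteq> \<infinity>"
      by (auto simp: emeasure_cball)
  qed
qed

lemma powint_has_integral:
  fixes r :: real and d :: nat and c :: real
  assumes "r \<ge> 0" "d \<ge> 1"
  shows "((\<lambda>t. real d * c * t ^ (d - 1)) has_integral (c * r ^ d)) {0..r}"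
proof -
  have "((\<lambda>t. real d * c * t ^ (d - 1)) has_integral (c * r ^ d - c * 0 ^ d)) {0..r}"
  proof (rule fundamental_theorem_of_calculus)
    show "0 \<le> r" using assms by simp
    fix x assume "x \<in> {0..r}"
    show "((\<lambda>t. c * t ^ d) has_vector_derivative real d * c * x ^ (d - 1)) (at x within {0..r})"
      unfolding has_real_derivative_iff_has_vector_derivative[symmetric]
      by (auto intro!: derivative_eq_intros)
  qed
  then show ?thesis using assms by (simp add: zero_power)
qed


lemma distr_norm_lborel:
  shows "distr (lborel :: 'a::euclidean_space measure) borel norm = density lborel (\<lambda>t. ennreal (indicator {0..} t * (real DIM('a) * unit_ball_vol DIM('a) * t ^ (DIM('a) - 1))))"
proof -
  define g where "g = (\<lambda>t. ennreal (indicator {0..} t * (real DIM('a) * unit_ball_vol DIM('a) * t ^ (DIM('a) - 1))))"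
  have "distr (lborel :: 'a measure) borel norm = density lborel g"
proof (rule measure_eqI_generator_eq_countable[where E = "range lessThan" and \<Omega> = UNIV and A = "range (\<lambda>n::nat. {..<real n})"])
  show "Int_stable (range lessThan :: real set set)"
  proof (unfold Int_stable_def, intro ballI)
    fix A B :: "real set" assume "A \<in> range lessThan" "B \<in> range lessThan"
    then obtain a b where ab: "A = {..<a}" "B = {..<b}" by auto
    then have "A \<inter> B = {..<min a b}" by auto
    then show "A \<inter> B \<in> range lessThan" by blast
  qed
  show "range lessThan \<subseteq> Pow (UNIV :: real set)" by auto
  show "sets (distr lborel borel norm) = sigma_sets UNIV (range lessThan :: real set set)"
    by (simp add: borel_Iio)
  show "sets (density lborel g) = sigma_sets UNIV (range lessThan :: real set set)"
    by (simp add: borel_Iio)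
  show "range (\<lambda>n::nat. {..<real n}) \<subseteq> range lessThan" by auto
  show "\<Union> (range (\<lambda>n::nat. {..<real n})) = UNIV"
    by (auto simp: real_arch_simple) (meson lessThan_iff reals_Archimedean2)
  show "countable (range (\<lambda>n::nat. {..<real n}))" by auto
  have key: "emeasure (distr (lborel::'a measure) borel norm) {..<r} = emeasure (density lborel g) {..<r}
     \<and> emeasure (distr (lborel::'a measure) borel norm) {..<r} \<noteq> \<infinity>" for r :: real
  proof -
    have g_m: "g \<in> borel_measurable borel" unfolding g_def by measurable
    have L: "emeasure (distr (lborel::'a measure) borel norm) {..<r} = emeasure lborel (ball (0::'a) r)"
    proof -
      have "emeasure (distr (lborel::'a measure) borel norm) {..<r} = emeasure lborel (norm -` {..<r} \<inter> space (lborel::'a measure))"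
        by (rule emeasure_distr) auto
      also have "norm -` {..<r} \<inter> space (lborel::'a measure) = ball (0::'a) r" by (auto simp: mem_ball)
      finally show ?thesis .
    qed
    show ?thesis
    proof (cases "r > 0")
      case False
      then have "ball (0::'a) r = {}" by auto
      then have "emeasure lborel (ball (0::'a) r) = 0" by (metis emeasure_empty)
      moreover have "emeasure (density lborel g) {..<r} = 0"
      proof -
        have z: "\<And>t. g t * indicator {..<r} t = 0" using False by (auto simp: g_def indicator_def)
        show ?thesis using g_m by (subst emeasure_density) (simp_all add: z)
      qed
      ultimately show ?thesis using L by simp
    next
      case True
      let ?d = "DIM('a)" let ?c = "unit_ball_vol DIM('a)"
      have "emeasure (density lborel g) {..<r} = (\<integral>\<^sup>+ t. g t * indicator {..<r} t \<partial>lborel)"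
        using g_m by (subst emeasure_density) auto
      also have "\<dots> = (\<integral>\<^sup>+ t. ennreal (indicator {0..r} t * (real ?d * ?c * t ^ (?d - 1))) \<partial>lborel)"
        by (intro nn_integral_cong_AE eventually_mono[OF AE_lborel_singleton[of r]])
           (auto simp: g_def indicator_def)
      also have "\<dots> = ennreal (?c * r ^ ?d)"
      proof (rule nn_integral_has_integral_lborel)
        show "(\<lambda>t. indicator {0..r} t * (real ?d * ?c * t ^ (?d - 1))) \<in> borel_measurable borel"
          by measurable
        show "0 \<le> indicator {0..r} t * (real ?d * ?c * t ^ (?d - 1))" for t
          by (auto simp: indicator_def)
        have e: "(\<lambda>t. indicator {0..r} t * (real ?d * ?c * t ^ (?d - 1))) = (\<lambda>t. if t \<in> {0..r} then real ?d * ?c * t ^ (?d - 1) else 0)"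
          by (auto simp: indicator_def fun_eq_iff)
        show "((\<lambda>t. indicator {0..r} t * (real ?d * ?c * t ^ (?d - 1))) has_integral ?c * r ^ ?d) UNIV"
          unfolding e has_integral_restrict_UNIV using powint_has_integral[of r ?d ?c] True by simp
      qed
      finally show ?thesis using L True by (simp add: emeasure_ball)
    qed
  qed
  show "emeasure (distr (lborel::'a measure) borel norm) X = emeasure (density lborel g) X" if "X \<in> range lessThan" for X
    using that key by auto
  show "emeasure (distr (lborel::'a measure) borel norm) a \<noteq> \<infinity>" if "a \<in> range (\<lambda>n::nat. {..<real n})" for a
    using that key by auto
qed
  then show ?thesis by (simp add: g_def)
qed


lemma radial_nn_integral:
  fixes f :: "real \<Rightarrow> ennreal"
  assumes f: "f \<in> borel_measurable borel"
  shows "(\<integral>\<^sup>+ x. f (norm x) \<partial>(lebesgue :: 'a::euclidean_space measure)) =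
    (\<integral>\<^sup>+ t. f t * ennreal (indicator {0..} t * (real DIM('a) * unit_ball_vol DIM('a) * t ^ (DIM('a) - 1))) \<partial>lborel)"
proof -
  have "(\<integral>\<^sup>+ x. f (norm x) \<partial>(lebesgue :: 'a measure)) = (\<integral>\<^sup>+ x. f (norm x) \<partial>(lborel :: 'a measure))"
    by (simp add: nn_integral_completion)
  also have "\<dots> = (\<integral>\<^sup>+ t. f t \<partial>distr (lborel :: 'a measure) borel norm)"
    using f by (subst nn_integral_distr) auto
  also have "\<dots> = (\<integral>\<^sup>+ t. f t * ennreal (indicator {0..} t * (real DIM('a) * unit_ball_vol DIM('a) * t ^ (DIM('a) - 1))) \<partial>lborel)"
    unfolding distr_norm_lborel using f
    by (subst nn_integral_density) (auto simp: mult.commute)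
  finally show ?thesis .
qed



lemma pair_sf: "pair_sigma_finite lborel (lebesgue :: 'a::euclidean_space measure)"
  by (simp add: pair_sigma_finite_def sigma_finite_lebesgue lborel.sigma_finite_measure_axioms)

lemma measure_lebesgue_ball:
  "t > 0 \<Longrightarrow> measure lebesgue (ball (0::'a::euclidean_space) t) = unit_ball_vol DIM('a) * t ^ DIM('a)"
  by (simp add: content_ball)

lemma part1:
  fixes u :: "'a::euclidean_space \<Rightarrow> real" and w :: "real \<Rightarrow> real" and q \<alpha> :: real
  assumes q: "q > 1" and wm: "w \<in> borel_measurable borel"
    and wi: "set_integrable lborel {0<..} (w_weight DIM('a) q \<alpha> w)"
    and um: "u \<in> borel_measurable lebesgue"
    and ui: "\<forall>\<rho>>0. set_integrable lebesgue (ball 0 \<rho>) u"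
    and ai: "set_integrable lborel {0<..} (avg_weight DIM('a) q \<alpha> u)"
  shows "\<bar>LINT x|lebesgue. \<bar>u x\<bar> * tail_int w (norm x)\<bar>
         \<le> unit_ball_vol DIM('a) * (LBINT \<rho>:{0<..}. w_weight DIM('a) q \<alpha> w \<rho>) powr ((q - 1) / q)
             * (LBINT \<rho>:{0<..}. avg_weight DIM('a) q \<alpha> u \<rho>) powr (1 / q)"
proof -
  let ?d = "DIM('a)"
  define c where "c = unit_ball_vol ?d"
  have c0: "c > 0" unfolding c_def by simp
  define p where "p = q / (q - 1)"
  have p1: "p > 1" using q by (simp add: p_def)
  have pq: "1/p + 1/q = 1" using q by (simp add: p_def field_simps)
  define a where "a = (\<alpha> * q + 1 - real ?d) / q"
  define b where "b = ((real ?d - \<alpha>) * q + real ?d - 1) / q"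
  have ab: "a + b = real ?d" using q by (simp add: a_def b_def field_simps)
  define \<Phi> where "\<Phi> t = (LINT y|lebesgue. indicator (ball 0 t) y * \<bar>u y\<bar>)" for t
  have uint: "integrable lebesgue (\<lambda>y. indicator (ball 0 t) y * \<bar>u y\<bar>)" if "t > 0" for t
  proof -
    have "set_integrable lebesgue (ball 0 t) (\<lambda>y. \<bar>u y\<bar>)"
      using ui that by (auto intro: set_integrable_abs)
    then show ?thesis by (simp add: set_integrable_def)
  qed
  have \<Phi>0: "\<Phi> t \<ge> 0" for t unfolding \<Phi>_def by (auto intro!: integral_nonneg_AE)
  have \<Phi>neg: "\<Phi> t = 0" if "t \<le> 0" for t
  proof -
    have e: "ball (0::'a) t = {}" using that by auto
    show ?thesis unfolding \<Phi>_def e by simp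
  qed
  have \<Phi>avg: "\<Phi> t = c * t ^ ?d * ball_avg u t" if "t > 0" for t
  proof -
    have m: "measure lebesgue (ball (0::'a) t) = c * t ^ ?d"
      using content_ball[of t "0::'a"] that by (simp add: c_def)
    have "c * t ^ ?d > 0" using c0 that by simp
    then show ?thesis unfolding \<Phi>_def ball_avg_def m using c0
      by (simp add: set_lebesgue_integral_def)
  qed
  have avg0: "ball_avg u t \<ge> 0" for t
    unfolding ball_avg_def set_lebesgue_integral_def by (auto intro!: integral_nonneg_AE divide_nonneg_nonneg)
  define F where "F t = (indicator {0<..} t * w_weight ?d q \<alpha> w t) powr (1/p)" for t
  define G where "G t = (indicator {0<..} t * avg_weight ?d q \<alpha> u t) powr (1/q)" for t
  have ww0: "w_weight ?d q \<alpha> w t \<ge> 0" for t unfolding w_weight_def by simp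
  have aw0: "avg_weight ?d q \<alpha> u t \<ge> 0" for t unfolding avg_weight_def by simp
  have Fp: "F t powr p = indicator {0<..} t * w_weight ?d q \<alpha> w t" for t
    unfolding F_def using p1 ww0[of t] by (simp add: powr_powr)
  have Gq: "G t powr q = indicator {0<..} t * avg_weight ?d q \<alpha> u t" for t
    unfolding G_def using q aw0[of t] by (simp add: powr_powr)
  have Fpos: "F t = \<bar>w t\<bar> * t powr a" if "t > 0" for t
  proof -
    have ap: "a * p = (\<alpha> * q + 1 - real ?d) / (q - 1)" using q by (simp add: a_def p_def field_simps)
    have "F t = (\<bar>w t\<bar> powr p * t powr (a * p)) powr (1/p)"
      unfolding F_def w_weight_def ap using that by (simp add: p_def)
    also have "\<dots> = \<bar>w t\<bar> * t powr a"
      using that p1 by (simp add: powr_mult powr_powr)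
    finally show ?thesis .
  qed
  have Gpos: "G t = ball_avg u t * t powr b" if "t > 0" for t
  proof -
    have bq: "b * q = (real ?d - \<alpha>) * q + real ?d - 1" using q by (simp add: b_def field_simps)
    have "G t = (ball_avg u t powr q * t powr (b * q)) powr (1/q)"
      unfolding G_def avg_weight_def bq using that by simp
    also have "\<dots> = ball_avg u t * t powr b"
      using that q avg0[of t] by (simp add: powr_mult powr_powr)
    finally show ?thesis .
  qed
  have FG: "c * (F t * G t) = indicator {0<..} t * (\<bar>w t\<bar> * \<Phi> t)" for t
  proof (cases "t > 0")
    case True
    have "c * (F t * G t) = \<bar>w t\<bar> * (c * t powr (a + b) * ball_avg u t)"
      using True by (simp add: Fpos Gpos powr_add)
    also have "t powr (a + b) = t ^ ?d" using True ab by (simp add: powr_realpow)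
    finally show ?thesis using True by (simp add: \<Phi>avg)
  next
    case False
    then show ?thesis by (simp add: F_def G_def)
  qed
  have Fint: "integrable lborel (\<lambda>t. F t powr p)"
    using wi unfolding Fp set_integrable_def by simp
  have Gint: "integrable lborel (\<lambda>t. G t powr q)"
    using ai unfolding Gq set_integrable_def by simp
  have Fm: "F \<in> borel_measurable lborel"
  proof -
    have "(\<lambda>t. (F t powr p) powr (1/p)) \<in> borel_measurable lborel"
      using borel_measurable_integrable[OF Fint] by measurable
    moreover have "(F t powr p) powr (1/p) = F t" for t
      using p1 ww0[of t] by (simp add: F_def powr_powr)
    ultimately show ?thesis by simp
  qed
  have Gm: "G \<in> borel_measurable lborel"
  proof -
    have "(\<lambda>t. (G t powr q) powr (1/q)) \<in> borel_measurable lborel"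
      using borel_measurable_integrable[OF Gint] by measurable
    moreover have "(G t powr q) powr (1/q) = G t" for t
      using q aw0[of t] by (simp add: G_def powr_powr)
    ultimately show ?thesis by simp
  qed
  have F0: "F t \<ge> 0" for t by (simp add: F_def)
  have G0: "G t \<ge> 0" for t by (simp add: G_def)
  note HI = holder_real[OF p1 q pq Fm Gm F0 G0 Fint Gint]
  have Hb: "(LINT t|lborel. F t * G t) \<le> (LBINT \<rho>:{0<..}. w_weight ?d q \<alpha> w \<rho>) powr ((q - 1) / q)
             * (LBINT \<rho>:{0<..}. avg_weight ?d q \<alpha> u \<rho>) powr (1 / q)"
    using HI(2) unfolding Fp Gq set_lebesgue_integral_def using q by (simp add: p_def)
  define K where "K t x = \<bar>u x\<bar> * (indicator {norm x<..} t *\<^sub>R w t)" for t :: real and x :: 'a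
  interpret P: pair_sigma_finite lborel "lebesgue :: 'a measure" by (rule pair_sf)
  have Km: "(\<lambda>(t, x). K t x) \<in> borel_measurable (lborel \<Otimes>\<^sub>M (lebesgue :: 'a measure))"
  proof -
    have nm: "norm \<in> borel_measurable (lebesgue :: 'a measure)"
      by (rule measurable_completion) simp
    have "(\<lambda>(t, x). \<bar>u x\<bar> * ((if norm x < t then 1 else 0) * w t)) \<in> borel_measurable (lborel \<Otimes>\<^sub>M (lebesgue :: 'a measure))"
      using um wm nm by measurable
    then show ?thesis by (simp add: K_def indicator_def of_bool_def)
  qed
  have Kx: "(LINT x|lebesgue. K t x) = w t * \<Phi> t" for t
  proof -
    have "(LINT x|lebesgue. K t x) = (LINT x|lebesgue. (indicator (ball 0 t) x * \<bar>u x\<bar>) * w t)"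
      by (intro Bochner_Integration.integral_cong) (auto simp: K_def indicator_def mem_ball)
    also have "\<dots> = \<Phi> t * w t" unfolding \<Phi>_def by simp
    finally show ?thesis by simp
  qed
  have Kt: "(LINT t|lborel. K t x) = \<bar>u x\<bar> * tail_int w (norm x)" for x
    unfolding K_def tail_int_def set_lebesgue_integral_def by simp
  have absK: "(LINT x|lebesgue. \<bar>K t x\<bar>) = indicator {0<..} t * (\<bar>w t\<bar> * \<Phi> t)" for t
  proof (cases "t > 0")
    case True
    have "(LINT x|lebesgue. \<bar>K t x\<bar>) = (LINT x|lebesgue. (indicator (ball 0 t) x * \<bar>u x\<bar>) * \<bar>w t\<bar>)"
      by (intro Bochner_Integration.integral_cong) (auto simp: K_def indicator_def mem_ball abs_mult)
    also have "\<dots> = \<Phi> t * \<bar>w t\<bar>" unfolding \<Phi>_def by simp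
    finally show ?thesis using True by simp
  next
    case False
    have "K t x = 0" for x
    proof -
      have "\<not> norm x < t" using False norm_ge_zero[of x] by linarith
      then show ?thesis unfolding K_def by simp
    qed
    then show ?thesis using False by simp
  qed
  have FGint: "integrable lborel (\<lambda>t. indicator {0<..} t * (\<bar>w t\<bar> * \<Phi> t))"
  proof -
    have "integrable lborel (\<lambda>t. c * (F t * G t))" using HI(1) by simp
    then show ?thesis unfolding FG .
  qed
  have Kint: "integrable (lborel \<Otimes>\<^sub>M (lebesgue :: 'a measure)) (\<lambda>(t, x). K t x)"
  proof (rule P.Fubini_integrable)
    show "(\<lambda>(t, x). K t x) \<in> borel_measurable (lborel \<Otimes>\<^sub>M lebesgue)" by (rule Km)
    show "integrable lborel (\<lambda>t. LINT x|lebesgue. norm (case (t, x) of (t, x) \<Rightarrow> K t x))"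
      using FGint by (simp add: absK)
    show "AE t in lborel. integrable lebesgue (\<lambda>x. case (t, x) of (t, x) \<Rightarrow> K t x)"
    proof (rule AE_I2)
      fix t :: real
      show "integrable lebesgue (\<lambda>x. case (t, x) of (t, x) \<Rightarrow> K t x)"
      proof (cases "t > 0")
        case True
        have "integrable lebesgue (\<lambda>x. (indicator (ball 0 t) x * \<bar>u x\<bar>) * w t)"
          using uint[OF True] by simp
        moreover have "(indicator (ball 0 t) x * \<bar>u x\<bar>) * w t = K t x" for x
          by (auto simp: K_def indicator_def mem_ball)
        ultimately show ?thesis by simp
      next
        case False
        have "K t x = 0" for x
    proof -
      have "\<not> norm x < t" using False norm_ge_zero[of x] by linarith
      then show ?thesis unfolding K_def by simp
    qed
        then show ?thesis by simp
      qed
    qed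
  qed
  have "(LINT x|lebesgue. \<bar>u x\<bar> * tail_int w (norm x)) = (LINT x|lebesgue. LINT t|lborel. K t x)"
    by (simp add: Kt)
  also have "\<dots> = (LINT t|lborel. LINT x|lebesgue. K t x)"
    using P.Fubini_integral[OF Kint] by simp
  also have "\<dots> = (LINT t|lborel. w t * \<Phi> t)" by (simp add: Kx)
  finally have eq: "(LINT x|lebesgue. \<bar>u x\<bar> * tail_int w (norm x)) = (LINT t|lborel. w t * \<Phi> t)" .
  have wPhi: "integrable lborel (\<lambda>t. w t * \<Phi> t)"
  proof -
    have "integrable lborel (\<lambda>t. LINT x|lebesgue. K t x)"
      using P.integrable_fst'[OF Kint] by simp
    then show ?thesis by (simp add: Kx)
  qed
  have "\<bar>LINT t|lborel. w t * \<Phi> t\<bar> \<le> (LINT t|lborel. indicator {0<..} t * (\<bar>w t\<bar> * \<Phi> t))"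
  proof (rule integral_abs_bound_integral[OF wPhi FGint])
    fix t :: real
    show "\<bar>w t * \<Phi> t\<bar> \<le> indicator {0<..} t * (\<bar>w t\<bar> * \<Phi> t)"
      using \<Phi>0[of t] \<Phi>neg[of t] by (cases "t > 0") (auto simp: abs_mult)
  qed
  also have "\<dots> = c * (LINT t|lborel. F t * G t)"
    unfolding FG[symmetric] by simp
  also have "\<dots> \<le> c * ((LBINT \<rho>:{0<..}. w_weight ?d q \<alpha> w \<rho>) powr ((q - 1) / q)
             * (LBINT \<rho>:{0<..}. avg_weight ?d q \<alpha> u \<rho>) powr (1 / q))"
    using Hb c0 by simp
  finally show ?thesis using eq by (simp add: c_def mult.assoc)
qed



lemma AE_ex_lebesgue:
  assumes "AE x in (lebesgue :: 'a::euclidean_space measure). P x"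
  shows "\<exists>x. P x"
proof (rule ccontr)
  assume "\<not> (\<exists>x. P x)"
  then have "AE x in (lebesgue :: 'a measure). False" using assms by auto
  then have "emeasure (lebesgue :: 'a measure) UNIV = 0"
    by (subst (asm) AE_iff_measurable[of UNIV]) auto
  moreover have "emeasure (lebesgue :: 'a measure) (cball 0 1) \<le> emeasure lebesgue UNIV"
    using emeasure_space[of lebesgue "cball (0::'a) 1"] by simp
  moreover have "emeasure (lebesgue :: 'a measure) (cball 0 1) > 0"
    by (simp add: emeasure_cball)
  ultimately show False by simp
qed

lemma local_int:
  fixes u :: "'a::euclidean_space \<Rightarrow> real"
  assumes a0: "\<alpha> > 0" and um: "u \<in> borel_measurable lebesgue"
    and ae: "AE x in lebesgue. integrable lebesgue (\<lambda>y. \<bar>u y\<bar> / norm (x - y) powr \<alpha>)"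
    and r: "\<rho> > 0"
  shows "set_integrable lebesgue (ball 0 \<rho>) u"
proof -
  obtain x0 where x0: "integrable lebesgue (\<lambda>y. \<bar>u y\<bar> / norm (x0 - y) powr \<alpha>)"
    using AE_ex_lebesgue[OF ae] by blast
  define N where "N = (norm x0 + \<rho>) powr \<alpha>"
  have AEx0: "AE y in lebesgue. y \<noteq> x0"
    using AE_completion[OF AE_lborel_singleton[of x0]] by simp
  show ?thesis unfolding set_integrable_def
  proof (rule Bochner_Integration.integrable_bound)
    show "integrable lebesgue (\<lambda>y. N * (\<bar>u y\<bar> / norm (x0 - y) powr \<alpha>))"
      using x0 by (rule integrable_mult_right)
    show "(\<lambda>y. indicator (ball 0 \<rho>) y *\<^sub>R u y) \<in> borel_measurable lebesgue"
      using um by (intro borel_measurable_scaleR borel_measurable_indicator) auto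
    show "AE y in lebesgue. norm (indicator (ball 0 \<rho>) y *\<^sub>R u y) \<le> norm (N * (\<bar>u y\<bar> / norm (x0 - y) powr \<alpha>))"
      using AEx0
    proof eventually_elim
      case (elim y)
      show ?case
      proof (cases "y \<in> ball 0 \<rho>")
        case True
        have n0: "norm (x0 - y) > 0" using elim by simp
        have "norm (x0 - y) \<le> norm x0 + norm y" by (rule norm_triangle_ineq4)
        also have "\<dots> \<le> norm x0 + \<rho>" using True by (simp add: mem_ball)
        finally have "norm (x0 - y) powr \<alpha> \<le> N" unfolding N_def
          using a0 by (intro powr_mono2) auto
        then have m: "\<bar>u y\<bar> * norm (x0 - y) powr \<alpha> \<le> N * \<bar>u y\<bar>"
          by (metis abs_ge_zero mult.commute mult_left_mono)
        have "norm (x0 - y) powr \<alpha> > 0" using n0 by simp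
        with m have "\<bar>u y\<bar> \<le> N * (\<bar>u y\<bar> / norm (x0 - y) powr \<alpha>)"
          by (simp add: field_simps)
        then show ?thesis using True N_def by simp
      next
        case False
        then show ?thesis by (simp add: N_def)
      qed
    qed
  qed
qed

lemma Phi_mono:
  fixes u :: "'a::euclidean_space \<Rightarrow> real"
  assumes ui: "\<forall>\<rho>>0. set_integrable lebesgue (ball 0 \<rho>) u"
  shows "mono (\<lambda>t. LINT y|lebesgue. indicator (ball (0::'a) t) y * \<bar>u y\<bar>)"
proof (rule monoI)
  fix s t :: real assume st: "s \<le> t"
  have uint: "integrable lebesgue (\<lambda>y. indicator (ball 0 t) y * \<bar>u y\<bar>)" if "t > 0" for t
  proof -
    have "set_integrable lebesgue (ball 0 t) (\<lambda>y. \<bar>u y\<bar>)"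
      using ui that by (auto intro: set_integrable_abs)
    then show ?thesis by (simp add: set_integrable_def)
  qed
  show "(LINT y|lebesgue. indicator (ball (0::'a) s) y * \<bar>u y\<bar>) \<le> (LINT y|lebesgue. indicator (ball (0::'a) t) y * \<bar>u y\<bar>)"
  proof (cases "s > 0")
    case True
    show ?thesis
      using True st uint[of s] uint[of t]
      by (intro integral_mono) (auto simp: indicator_def mem_ball)
  next
    case False
    have e: "ball (0::'a) s = {}" using False by auto
    show ?thesis unfolding e by (auto intro!: integral_nonneg_AE)
  qed
qed

lemma part2:
  fixes q \<alpha> :: real and w :: "real \<Rightarrow> real"
  assumes q: "q > 1" and a0: "0 < \<alpha>" and wm: "w \<in> borel_measurable borel"
    and wi: "set_integrable lborel {0<..} (w_weight DIM('a::euclidean_space) q \<alpha> w)"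
  shows "\<exists>C>0. \<forall>u::'a \<Rightarrow> real.
          u \<in> borel_measurable lebesgue \<and>
          (AE x in lebesgue. integrable lebesgue (\<lambda>y. \<bar>u y\<bar> / norm (x - y) powr \<alpha>)) \<and>
          integrable lebesgue (\<lambda>x. \<bar>riesz_conv \<alpha> u x\<bar> powr q)
          \<longrightarrow>
          \<bar>LINT x|lebesgue. \<bar>u x\<bar> * tail_int w (norm x)\<bar>
            \<le> C * (LINT x|lebesgue. \<bar>riesz_conv \<alpha> u x\<bar> powr q) powr (1 / q)"
proof -
  let ?d = "DIM('a)"
  define c where "c = unit_ball_vol ?d"
  have c0: "c > 0" unfolding c_def by simp
  have d1: "?d \<ge> 1" using DIM_positive[where 'a='a] by linarith
  define Wq where "Wq = (LBINT \<rho>:{0<..}. w_weight ?d q \<alpha> w \<rho>) powr ((q - 1) / q)"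
  have Wq0: "Wq \<ge> 0" unfolding Wq_def by simp
  define K0 where "K0 = (2 powr \<alpha> / c) powr q"
  define K1 where "K1 = K0 / (real ?d * c)"
  have K1: "K1 \<ge> 0" unfolding K1_def K0_def using c0 by simp
  define C where "C = c * Wq * K1 powr (1/q) + 1"
  have C0: "C > 0" unfolding C_def using c0 Wq0 K1 by (simp add: add_nonneg_pos)
  show ?thesis
  proof (intro exI[of _ C] conjI allI impI C0)
    fix u :: "'a \<Rightarrow> real"
    assume asm: "u \<in> borel_measurable lebesgue \<and>
          (AE x in lebesgue. integrable lebesgue (\<lambda>y. \<bar>u y\<bar> / norm (x - y) powr \<alpha>)) \<and>
          integrable lebesgue (\<lambda>x. \<bar>riesz_conv \<alpha> u x\<bar> powr q)"
    then have um: "u \<in> borel_measurable lebesgue"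
      and ae: "AE x in lebesgue. integrable lebesgue (\<lambda>y. \<bar>u y\<bar> / norm (x - y) powr \<alpha>)"
      and ri: "integrable lebesgue (\<lambda>x. \<bar>riesz_conv \<alpha> u x\<bar> powr q)" by auto
    define IR where "IR = (LINT x|lebesgue. \<bar>riesz_conv \<alpha> u x\<bar> powr q)"
    have IR0: "IR \<ge> 0" unfolding IR_def by (auto intro!: integral_nonneg_AE)
    have ui: "\<forall>\<rho>>0. set_integrable lebesgue (ball 0 \<rho>) u"
      using local_int[OF a0 um ae] by blast
    define \<Phi> where "\<Phi> t = (LINT y|lebesgue. indicator (ball 0 t) y * \<bar>u y\<bar>)" for t
    have uint: "integrable lebesgue (\<lambda>y. indicator (ball 0 t) y * \<bar>u y\<bar>)" if "t > 0" for t
    proof -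
      have "set_integrable lebesgue (ball 0 t) (\<lambda>y. \<bar>u y\<bar>)"
        using ui that by (auto intro: set_integrable_abs)
      then show ?thesis by (simp add: set_integrable_def)
    qed
    have \<Phi>m: "\<Phi> \<in> borel_measurable borel"
      unfolding \<Phi>_def by (rule borel_measurable_mono[OF Phi_mono[OF ui]])
    have measb: "measure lebesgue (ball (0::'a) t) = (if t > 0 then c * t ^ ?d else 0)" for t
    proof (cases "t > 0")
      case True
      then show ?thesis using content_ball[of t "0::'a"] by (simp add: c_def)
    next
      case False
      then have e: "ball (0::'a) t = {}" by auto
      show ?thesis unfolding e using False by simp
    qed
    have avg_eq: "ball_avg u t = \<Phi> t / (if t > 0 then c * t ^ ?d else 0)" for t
      unfolding ball_avg_def \<Phi>_def measb by (simp add: set_lebesgue_integral_def)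
    have avgm: "ball_avg u \<in> borel_measurable borel"
      unfolding avg_eq[abs_def] using \<Phi>m by measurable
    have avg0: "ball_avg u t \<ge> 0" for t
      unfolding ball_avg_def set_lebesgue_integral_def by (auto intro!: integral_nonneg_AE divide_nonneg_nonneg)
    define h where "h t = indicator {0<..} t * (ball_avg u t powr q * t powr ((real ?d - \<alpha>) * q))" for t
    have hm: "h \<in> borel_measurable borel" unfolding h_def using avgm by measurable
    have R0: "riesz_conv \<alpha> u x \<ge> 0" for x
      unfolding riesz_conv_def by (auto intro!: integral_nonneg_AE)
    have hbound: "AE x in lebesgue. h (norm x) \<le> K0 * \<bar>riesz_conv \<alpha> u x\<bar> powr q"
      using ae
    proof eventually_elim
      case (elim x)
      show ?case
      proof (cases "x = 0")
        case True
        then show ?thesis unfolding h_def K0_def by simp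
      next
        case False
        define t where "t = norm x"
        have t0: "t > 0" using False by (simp add: t_def)
        have "\<Phi> t \<le> (LINT y|lebesgue. (2 * t) powr \<alpha> * (\<bar>u y\<bar> / norm (x - y) powr \<alpha>))"
          unfolding \<Phi>_def
        proof (rule integral_mono)
          show "integrable lebesgue (\<lambda>y. indicator (ball 0 t) y * \<bar>u y\<bar>)" using uint[OF t0] .
          show "integrable lebesgue (\<lambda>y. (2 * t) powr \<alpha> * (\<bar>u y\<bar> / norm (x - y) powr \<alpha>))"
            using elim by (rule integrable_mult_right)
          fix y :: 'a
          show "indicator (ball 0 t) y * \<bar>u y\<bar> \<le> (2 * t) powr \<alpha> * (\<bar>u y\<bar> / norm (x - y) powr \<alpha>)"
          proof (cases "y \<in> ball 0 t")
            case True
            then have ny: "norm y < t" by (simp add: mem_ball)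
            have "norm (x - y) \<ge> norm x - norm y" by (rule norm_triangle_ineq2)
            then have n0: "norm (x - y) > 0" using ny t_def by linarith
            have "norm (x - y) \<le> norm x + norm y" by (rule norm_triangle_ineq4)
            then have "norm (x - y) \<le> 2 * t" using ny t_def by linarith
            then have "norm (x - y) powr \<alpha> \<le> (2 * t) powr \<alpha>" using a0 by (intro powr_mono2) auto
            then have m: "\<bar>u y\<bar> * norm (x - y) powr \<alpha> \<le> (2 * t) powr \<alpha> * \<bar>u y\<bar>"
              by (metis abs_ge_zero mult.commute mult_left_mono)
            have "norm (x - y) powr \<alpha> > 0" using n0 by simp
            with m True show ?thesis by (simp add: field_simps)
          next
            case False
            then show ?thesis by simp
          qed
        qed
        also have "\<dots> = (2 * t) powr \<alpha> * riesz_conv \<alpha> u x"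
          unfolding riesz_conv_def by (rule integral_mult_right_zero)
        finally have Pb: "\<Phi> t \<le> (2 * t) powr \<alpha> * riesz_conv \<alpha> u x" .
        have tpos: "c * t ^ ?d > 0" using c0 t0 by simp
        have "ball_avg u t * t powr (real ?d - \<alpha>) = \<Phi> t * t powr (real ?d - \<alpha>) / (c * t ^ ?d)"
          using t0 by (simp add: avg_eq)
        also have "\<dots> \<le> (2 * t) powr \<alpha> * riesz_conv \<alpha> u x * t powr (real ?d - \<alpha>) / (c * t ^ ?d)"
          using Pb tpos by (intro divide_right_mono mult_right_mono) auto
        also have "\<dots> = 2 powr \<alpha> * riesz_conv \<alpha> u x / c"
        proof -
          have "(2 * t) powr \<alpha> * t powr (real ?d - \<alpha>) = 2 powr \<alpha> * t ^ ?d"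
            using t0 by (simp add: powr_mult mult.assoc powr_add[symmetric] powr_realpow)
          then show ?thesis using tpos c0 t0 by (simp add: field_simps)
        qed
        finally have ab: "ball_avg u t * t powr (real ?d - \<alpha>) \<le> 2 powr \<alpha> * riesz_conv \<alpha> u x / c" .
        have "h t = (ball_avg u t * t powr (real ?d - \<alpha>)) powr q"
          unfolding h_def using t0 avg0[of t] by (simp add: powr_mult powr_powr mult.commute)
        also have "\<dots> \<le> (2 powr \<alpha> * riesz_conv \<alpha> u x / c) powr q"
          using ab q avg0[of t] t0 by (intro powr_mono2) auto
        also have "\<dots> = K0 * \<bar>riesz_conv \<alpha> u x\<bar> powr q"
          unfolding K0_def using R0[of x] c0 by (simp add: powr_mult powr_divide)
        finally show ?thesis by (simp add: t_def)
      qed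
    qed
    define A where "A t = indicator {0<..} t * avg_weight ?d q \<alpha> u t" for t
    have aw0: "avg_weight ?d q \<alpha> u t \<ge> 0" for t unfolding avg_weight_def by simp
    have A0: "A t \<ge> 0" for t unfolding A_def using aw0[of t] by simp
    have h0: "h t \<ge> 0" for t unfolding h_def by simp
    have Am: "A \<in> borel_measurable borel"
      unfolding A_def[abs_def] avg_weight_def using avgm by measurable
    have Aeq: "A t = (1 / (real ?d * c)) * (h t * (indicator {0..} t * (real ?d * c * t ^ (?d - 1))))" for t
    proof (cases "t > 0")
      case True
      have e1: "t ^ (?d - 1) = t powr (real ?d - 1)"
        using True d1 by (simp add: powr_realpow[symmetric] of_nat_diff)
      have "A t = ball_avg u t powr q * (t powr ((real ?d - \<alpha>) * q) * t powr (real ?d - 1))"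
        unfolding A_def avg_weight_def using True by (simp add: powr_add[symmetric] algebra_simps)
      then show ?thesis unfolding h_def e1 using True c0 d1 by (simp add: field_simps)
    next
      case False
      then show ?thesis unfolding A_def h_def by simp
    qed
    have "(\<integral>\<^sup>+ t. ennreal (A t) \<partial>lborel) = (\<integral>\<^sup>+ t. ennreal (1 / (real ?d * c)) * (ennreal (h t) * ennreal (indicator {0..} t * (real ?d * c * t ^ (?d - 1)))) \<partial>lborel)"
      unfolding Aeq using c0 h0
      by (intro nn_integral_cong) (simp add: ennreal_mult[symmetric] indicator_def)
    also have "\<dots> = ennreal (1 / (real ?d * c)) * (\<integral>\<^sup>+ t. ennreal (h t) * ennreal (indicator {0..} t * (real ?d * c * t ^ (?d - 1))) \<partial>lborel)"
      using hm by (intro nn_integral_cmult) auto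
    also have "(\<integral>\<^sup>+ t. ennreal (h t) * ennreal (indicator {0..} t * (real ?d * c * t ^ (?d - 1))) \<partial>lborel)
       = (\<integral>\<^sup>+ x. ennreal (h (norm x)) \<partial>(lebesgue :: 'a measure))"
      using radial_nn_integral[of "\<lambda>t. ennreal (h t)", where 'a='a] hm by (simp add: c_def)
    also have "ennreal (1 / (real ?d * c)) * (\<integral>\<^sup>+ x. ennreal (h (norm x)) \<partial>(lebesgue :: 'a measure)) \<le> ennreal (1 / (real ?d * c)) * (\<integral>\<^sup>+ x. ennreal (K0 * \<bar>riesz_conv \<alpha> u x\<bar> powr q) \<partial>lebesgue)"
      using hbound by (intro mult_left_mono nn_integral_mono_AE) (auto elim!: eventually_mono intro: ennreal_leI)
    also have "(\<integral>\<^sup>+ x. ennreal (K0 * \<bar>riesz_conv \<alpha> u x\<bar> powr q) \<partial>lebesgue) = ennreal (K0 * IR)"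
      unfolding IR_def using ri K1 c0
      by (subst nn_integral_eq_integral) (auto simp: K0_def)
    also have "ennreal (1 / (real ?d * c)) * ennreal (K0 * IR) = ennreal (K1 * IR)"
    proof -
      have "K0 \<ge> 0" unfolding K0_def by simp
      then have "ennreal (1 / (real ?d * c)) * ennreal (K0 * IR) = ennreal (1 / (real ?d * c) * (K0 * IR))"
        using c0 IR0 by (subst ennreal_mult) auto
      then show ?thesis by (simp add: K1_def)
    qed
    finally have nnA: "(\<integral>\<^sup>+ t. ennreal (A t) \<partial>lborel) \<le> ennreal (K1 * IR)"
      by simp
    have Aint: "integrable lborel A"
    proof (rule integrableI_bounded)
      show "A \<in> borel_measurable lborel" using Am by simp
      have "(\<integral>\<^sup>+ t. ennreal (norm (A t)) \<partial>lborel) = (\<integral>\<^sup>+ t. ennreal (A t) \<partial>lborel)"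
        using A0 by simp
      also have "\<dots> < \<infinity>" using nnA by (simp add: le_less_trans)
      finally show "(\<integral>\<^sup>+ t. ennreal (norm (A t)) \<partial>lborel) < \<infinity>" .
    qed
    have ai: "set_integrable lborel {0<..} (avg_weight ?d q \<alpha> u)"
      using Aint unfolding set_integrable_def A_def by simp
    have IA: "(LBINT \<rho>:{0<..}. avg_weight ?d q \<alpha> u \<rho>) = (LINT t|lborel. A t)"
      unfolding set_lebesgue_integral_def A_def by simp
    have IA0: "(LINT t|lborel. A t) \<ge> 0" using A0 by (auto intro!: integral_nonneg_AE)
    have "ennreal (LINT t|lborel. A t) = (\<integral>\<^sup>+ t. ennreal (A t) \<partial>lborel)"
      using Aint A0 by (subst nn_integral_eq_integral) auto
    with nnA have "ennreal (LINT t|lborel. A t) \<le> ennreal (K1 * IR)" by simp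
    then have IAb: "(LINT t|lborel. A t) \<le> K1 * IR"
      using K1 IR0 ennreal_le_iff by (metis mult_nonneg_nonneg)
    note P1 = part1[OF q wm wi um ui ai]
    have "(LBINT \<rho>:{0<..}. avg_weight ?d q \<alpha> u \<rho>) powr (1/q) \<le> (K1 * IR) powr (1/q)"
      unfolding IA using IAb IA0 q by (intro powr_mono2) auto
    also have "\<dots> = K1 powr (1/q) * IR powr (1/q)" using K1 IR0 by (simp add: powr_mult)
    finally have b2: "(LBINT \<rho>:{0<..}. avg_weight ?d q \<alpha> u \<rho>) powr (1/q) \<le> K1 powr (1/q) * IR powr (1/q)" .
    have "\<bar>LINT x|lebesgue. \<bar>u x\<bar> * tail_int w (norm x)\<bar> \<le> c * Wq * (LBINT \<rho>:{0<..}. avg_weight ?d q \<alpha> u \<rho>) powr (1/q)"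
      using P1 by (simp add: c_def Wq_def)
    also have "\<dots> \<le> c * Wq * (K1 powr (1/q) * IR powr (1/q))"
      using b2 c0 Wq0 by (intro mult_left_mono) auto
    also have "\<dots> \<le> C * IR powr (1/q)"
      unfolding C_def by (simp add: algebra_simps)
    finally show "\<bar>LINT x|lebesgue. \<bar>u x\<bar> * tail_int w (norm x)\<bar> \<le> C * (LINT x|lebesgue. \<bar>riesz_conv \<alpha> u x\<bar> powr q) powr (1 / q)"
      by (simp add: IR_def)
  qed
qed

theorem lemma2p4:
  fixes dummy :: "'a::euclidean_space"
  shows
   "(\<exists>C>0. \<forall>(q::real) (\<alpha>::real) (w::real \<Rightarrow> real) (u::'a \<Rightarrow> real).
       q > 1 \<and> 0 < \<alpha> \<and> \<alpha> < real DIM('a) \<and> w \<in> borel_measurable borel \<and>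
       set_integrable lborel {0<..} (w_weight DIM('a) q \<alpha> w) \<and>
       u \<in> borel_measurable lebesgue \<and>
       (\<forall>\<rho>>0. set_integrable lebesgue (ball 0 \<rho>) u) \<and>
       set_integrable lborel {0<..} (avg_weight DIM('a) q \<alpha> u)
       \<longrightarrow>
       \<bar>LINT x|lebesgue. \<bar>u x\<bar> * tail_int w (norm x)\<bar>
         \<le> C * (LBINT \<rho>:{0<..}. w_weight DIM('a) q \<alpha> w \<rho>) powr ((q - 1) / q)
             * (LBINT \<rho>:{0<..}. avg_weight DIM('a) q \<alpha> u \<rho>) powr (1 / q))
    \<and>
    (\<forall>(q::real) (\<alpha>::real) (w::real \<Rightarrow> real).
       q > 1 \<and> 0 < \<alpha> \<and> \<alpha> < real DIM('a) \<and> w \<in> borel_measurable borel \<and>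
       set_integrable lborel {0<..} (w_weight DIM('a) q \<alpha> w)
       \<longrightarrow>
       (\<exists>C>0. \<forall>u::'a \<Rightarrow> real.
          u \<in> borel_measurable lebesgue \<and>
          (AE x in lebesgue. integrable lebesgue (\<lambda>y. \<bar>u y\<bar> / norm (x - y) powr \<alpha>)) \<and>
          integrable lebesgue (\<lambda>x. \<bar>riesz_conv \<alpha> u x\<bar> powr q)
          \<longrightarrow>
          \<bar>LINT x|lebesgue. \<bar>u x\<bar> * tail_int w (norm x)\<bar>
            \<le> C * (LINT x|lebesgue. \<bar>riesz_conv \<alpha> u x\<bar> powr q) powr (1 / q)))"
proof (intro conjI)
  show "\<exists>C>0. \<forall>(q::real) (\<alpha>::real) (w::real \<Rightarrow> real) (u::'a \<Rightarrow> real).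
       q > 1 \<and> 0 < \<alpha> \<and> \<alpha> < real DIM('a) \<and> w \<in> borel_measurable borel \<and>
       set_integrable lborel {0<..} (w_weight DIM('a) q \<alpha> w) \<and>
       u \<in> borel_measurable lebesgue \<and>
       (\<forall>\<rho>>0. set_integrable lebesgue (ball 0 \<rho>) u) \<and>
       set_integrable lborel {0<..} (avg_weight DIM('a) q \<alpha> u)
       \<longrightarrow>
       \<bar>LINT x|lebesgue. \<bar>u x\<bar> * tail_int w (norm x)\<bar>
         \<le> C * (LBINT \<rho>:{0<..}. w_weight DIM('a) q \<alpha> w \<rho>) powr ((q - 1) / q)
             * (LBINT \<rho>:{0<..}. avg_weight DIM('a) q \<alpha> u \<rho>) powr (1 / q)"
    by (intro exI[of _ "unit_ball_vol DIM('a)"] conjI allI impI) (simp, (elim conjE, rule part1; assumption))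
next
  show "\<forall>(q::real) (\<alpha>::real) (w::real \<Rightarrow> real).
       q > 1 \<and> 0 < \<alpha> \<and> \<alpha> < real DIM('a) \<and> w \<in> borel_measurable borel \<and>
       set_integrable lborel {0<..} (w_weight DIM('a) q \<alpha> w)
       \<longrightarrow>
       (\<exists>C>0. \<forall>u::'a \<Rightarrow> real.
          u \<in> borel_measurable lebesgue \<and>
          (AE x in lebesgue. integrable lebesgue (\<lambda>y. \<bar>u y\<bar> / norm (x - y) powr \<alpha>)) \<and>
          integrable lebesgue (\<lambda>x. \<bar>riesz_conv \<alpha> u x\<bar> powr q)
          \<longrightarrow>
          \<bar>LINT x|lebesgue. \<bar>u x\<bar> * tail_int w (norm x)\<bar>
            \<le> C * (LINT x|lebesgue. \<bar>riesz_conv \<alpha> u x\<bar> powr q) powr (1 / q))"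
    by (intro allI impI) (elim conjE, rule part2; assumption)
qed

end
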